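(* Let $\vec{G}$ be a DDMOG of order $n$ with DDM labeling $g$, its vertices indexed $v_1,\dots,v_n$ so that $g(v_i)=i$. Then for every integer $\ell$ with $1\le\ell\le n/2$ there exists a labeling $h$ of $\ell\vec{C_4}$ (taken vertex-disjoint from $\vec{G}$) for which the weighted sum $\vec{G}\oplus_{wt_h}^0\ell\vec{C_4}$ is defined and is a DDMOG.
   Context: An oriented graph is a finite digraph without loops such that whenever $(u,v)$ is an arc, $(v,u)$ is not. For a vertex $v$, $N^+(v)=\{x:(x,v)\text{ is an arc}\}$, $N^-(v)=\{x:(v,x)\text{ is an arc}\}$; for a labeling $f$, $wt_f(v)=\sum_{x\in N^+(v)}f(x)-\sum_{x\in N^-(v)}f(x)$. A DDM labeling of an oriented graph on $n$ vertices is a bijection $f:V\to\{1,\dots,n\}$ with $wt_f(v)=0$ for all $v$; a DDMOG is an oriented graph admitting one. $\ell\vec{C_4}$ denotes the oriented graph consisting of $\ell$ vertex-disjoint directed 4-cycles, the $i$-th having vertices $v_{i1},v_{i2},v_{i3},v_{i4}$ and arcs $(v_{i1},v_{i2}),(v_{i2},v_{i3}),(v_{i3},v_{i4}),(v_{i4},v_{i1})$. For an oriented graph $\vec{H}$ with labeling $h$ and integer $j$, $V_h^{j}(\vec{H})=\{u:wt_h(u)=j\}$. Weighted sum: let $\vec{G}$ have vertices $v_1,\dots,v_n$ (indexed by a labeling $g$ with $g(v_i)=i$), $s\in\mathbb{Z}$, and $\vec{H}$ (vertex-disjoint from $\vec{G}$) have a labeling $h:V(\vec{H})\to\mathbb{Z}^+$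 with $\{|wt_h(u)|:u\in V(\vec{H})\}\subseteq\{0\}\cup\{i+s:1\le i\le n\}$; then $\vec{G}\oplus_{wt_h}^s\vec{H}$ has vertex set $V(\vec{G})\cup V(\vec{H})$ and arc set $E(\vec{G})\cup E(\vec{H})\cup\bigcup_{i=1}^n(E^i\cup E^{-i})$, where $E^i=\{(v_i,u):u\in V_h^{-i-s}(\vec{H})\}$ and $E^{-i}=\{(u,v_i):u\in V_h^{i+s}(\vec{H})\}$. *)

theory Defs
  imports Main
begin

definition oriented_graph :: "'a set \<Rightarrow> ('a \<times> 'a) set \<Rightarrow> bool" where
  "oriented_graph V E \<longleftrightarrow> finite V \<and> E \<subseteq> V \<times> V \<and> (\<forall>v. (v, v) \<notin> E)
     \<and> (\<forall>u v. (u, v) \<in> E \<longrightarrow> (v, u) \<notin> E)"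

text \<open>N+(v) = in-neighbours, N-(v) = out-neighbours.\<close>
definition in_nbrs :: "'a set \<Rightarrow> ('a \<times> 'a) set \<Rightarrow> 'a \<Rightarrow> 'a set" where
  "in_nbrs V E v = {x \<in> V. (x, v) \<in> E}"

definition out_nbrs :: "'a set \<Rightarrow> ('a \<times> 'a) set \<Rightarrow> 'a \<Rightarrow> 'a set" where
  "out_nbrs V E v = {x \<in> V. (v, x) \<in> E}"

definition wt :: "'a set \<Rightarrow> ('a \<times> 'a) set \<Rightarrow> ('a \<Rightarrow> int) \<Rightarrow> 'a \<Rightarrow> int" where
  "wt V E f v = (\<Sum>x\<in>in_nbrs V E v. f x) - (\<Sum>x\<in>out_nbrs V E v. f x)"

definition DDM_labeling :: "'a set \<Rightarrow> ('a \<times> 'a) set \<Rightarrow> ('a \<Rightarrow> int) \<Rightarrow> bool" where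
  "DDM_labeling V E f \<longleftrightarrow> bij_betw f V {1..int (card V)} \<and> (\<forall>v\<in>V. wt V E f v = 0)"

definition DDMOG :: "'a set \<Rightarrow> ('a \<times> 'a) set \<Rightarrow> bool" where
  "DDMOG V E \<longleftrightarrow> oriented_graph V E \<and> (\<exists>f. DDM_labeling V E f)"

text \<open>l disjoint directed 4-cycles; vertex v_ij is (i,j), 1 <= i <= l, 1 <= j <= 4.\<close>
definition C4s_vertices :: "nat \<Rightarrow> (nat \<times> nat) set" where
  "C4s_vertices l = {1..l} \<times> {1..4}"

definition C4s_arcs :: "nat \<Rightarrow> ((nat \<times> nat) \<times> (nat \<times> nat)) set" where
  "C4s_arcs l = {((i, j), (i, j mod 4 + 1)) | i j. i \<in> {1..l} \<and> j \<in> {1..4}}"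

text \<open>Side conditions under which the weighted sum G \<oplus>^s_{wt_h} H is defined:
  g indexes the vertices of G as v_1..v_n (g(v_i) = i), h takes positive integer values
  on V(H), and every |wt_h(u)| lies in {0} \<union> {i+s : 1 \<le> i \<le> n}.\<close>
definition weighted_sum_defined ::
  "'a set \<Rightarrow> ('a \<Rightarrow> int) \<Rightarrow> int \<Rightarrow> 'b set \<Rightarrow> ('b \<times> 'b) set \<Rightarrow> ('b \<Rightarrow> int) \<Rightarrow> bool" where
  "weighted_sum_defined V g s VH EH h \<longleftrightarrow>
     bij_betw g V {1..int (card V)} \<and> (\<forall>u\<in>VH. h u > 0) \<and>
     (\<forall>u\<in>VH. \<bar>wt VH EH h u\<bar> \<in> {0} \<union> {i + s | i. 1 \<le> i \<and> i \<le> int (card V)})"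

definition wsum_vertices :: "'a set \<Rightarrow> 'b set \<Rightarrow> ('a + 'b) set" where
  "wsum_vertices V VH = Inl ` V \<union> Inr ` VH"

definition wsum_arcs ::
  "'a set \<Rightarrow> ('a \<times> 'a) set \<Rightarrow> ('a \<Rightarrow> int) \<Rightarrow> int \<Rightarrow> 'b set \<Rightarrow> ('b \<times> 'b) set \<Rightarrow> ('b \<Rightarrow> int)
    \<Rightarrow> (('a + 'b) \<times> ('a + 'b)) set" where
  "wsum_arcs V E g s VH EH h =
     map_prod Inl Inl ` E \<union> map_prod Inr Inr ` EH
     \<union> {(Inl v, Inr u) | v u. v \<in> V \<and> u \<in> VH \<and> wt VH EH h u = - g v - s}
     \<union> {(Inr u, Inl v) | v u. v \<in> V \<and> u \<in> VH \<and> wt VH EH h u = g v + s}"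

end

theory Submission
  imports Defs
begin

lemma D_mem: "((a,b),(c,d)) \<in> C4s_arcs l \<longleftrightarrow> a = c \<and> 1 \<le> a \<and> a \<le> l \<and>
   ((b=1\<and>d=2) \<or> (b=2\<and>d=3) \<or> (b=3\<and>d=4) \<or> (b=4\<and>d=1))"
proof
  assume "((a,b),(c,d)) \<in> C4s_arcs l"
  then obtain j where "a = c" "1 \<le> a" "a \<le> l" "b = j" "d = j mod 4 + 1" "j \<in> {1..4}"
    unfolding C4s_arcs_def by auto
  moreover have "j \<in> {1..4} \<Longrightarrow> j = 1 \<or> j = 2 \<or> j = 3 \<or> j = 4" by auto
  ultimately show "a = c \<and> 1 \<le> a \<and> a \<le> l \<and>
   ((b=1\<and>d=2) \<or> (b=2\<and>d=3) \<or> (b=3\<and>d=4) \<or> (b=4\<and>d=1))" by auto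
next
  assume "a = c \<and> 1 \<le> a \<and> a \<le> l \<and>
   ((b=1\<and>d=2) \<or> (b=2\<and>d=3) \<or> (b=3\<and>d=4) \<or> (b=4\<and>d=1))"
  then show "((a,b),(c,d)) \<in> C4s_arcs l"
    unfolding C4s_arcs_def by auto
qed

lemma C_mem: "(i,j) \<in> C4s_vertices l \<longleftrightarrow> 1 \<le> i \<and> i \<le> l \<and> (j = 1 \<or> j = 2 \<or> j = 3 \<or> j = 4)"
  unfolding C4s_vertices_def by auto

definition hh :: "nat \<Rightarrow> nat \<times> nat \<Rightarrow> int" where
  "hh n u = int n + 4 * int (fst u) - 4 +
     (if snd u = 1 then 3 else if snd u = 2 then 2 else if snd u = 3 then 1 else 4)"

lemma wtC:
  assumes "u \<in> C4s_vertices l"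
  shows "wt (C4s_vertices l) (C4s_arcs l) (hh n) u = (if snd u \<in> {1,2} then 2 else -2)"
proof -
  obtain i j where u: "u = (i,j)" by force
  from assms u have i: "1 \<le> i" "i \<le> l" and j: "j = 1 \<or> j = 2 \<or> j = 3 \<or> j = 4"
    by (auto simp: C_mem)
  have "in_nbrs (C4s_vertices l) (C4s_arcs l) (i,j) = {(i, if j = 1 then 4 else j - 1)}"
    using i j by (auto simp: in_nbrs_def C_mem D_mem)
  moreover have "out_nbrs (C4s_vertices l) (C4s_arcs l) (i,j) = {(i, if j = 4 then 1 else j + 1)}"
    using i j by (auto simp: out_nbrs_def C_mem D_mem)
  ultimately show ?thesis using j u by (auto simp: wt_def hh_def)
qed


theorem corollary2:
  fixes V :: "'a set" and E :: "('a \<times> 'a) set" and g :: "'a \<Rightarrow> int" and n :: nat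
  assumes "oriented_graph V E"
    and "card V = n"
    and "DDM_labeling V E g"
  shows "\<forall>l::nat. 1 \<le> l \<and> 2 * l \<le> n \<longrightarrow>
           (\<exists>h :: nat \<times> nat \<Rightarrow> int.
              weighted_sum_defined V g 0 (C4s_vertices l) (C4s_arcs l) h \<and>
              DDMOG (wsum_vertices V (C4s_vertices l))
                    (wsum_arcs V E g 0 (C4s_vertices l) (C4s_arcs l) h))"
proof (intro allI impI)
  fix l :: nat
  assume l: "1 \<le> l \<and> 2 * l \<le> n"
  define C where "C = C4s_vertices l"
  define D where "D = C4s_arcs l"
  define h where "h = hh n"
  have og: "finite V" "E \<subseteq> V \<times> V" "\<And>v. (v,v) \<notin> E" "\<And>u v. (u,v) \<in> E \<Longrightarrow> (v,u) \<notin> E"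
    using assms(1) unfolding oriented_graph_def by auto
  have bg: "bij_betw g V {1..int n}" and wg: "\<And>v. v \<in> V \<Longrightarrow> wt V E g v = 0"
    using assms(2,3) unfolding DDM_labeling_def by auto
  have gin: "inj_on g V" and gim: "g ` V = {1..int n}" using bg by (auto simp: bij_betw_def)
  have "(2::int) \<in> g ` V" using gim l by auto
  then obtain v0 where v0: "v0 \<in> V" "g v0 = 2" by auto
  have gv: "\<And>v. v \<in> V \<Longrightarrow> 1 \<le> g v \<and> g v \<le> int n" using gim by auto
  have gv0: "\<And>v. v \<in> V \<Longrightarrow> g v = 2 \<longleftrightarrow> v = v0"
    using v0 gin by (metis inj_onD)
  have wtC': "\<And>u. u \<in> C \<Longrightarrow> wt C D h u = (if snd u \<in> {1,2} then 2 else -2)"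
    unfolding C_def D_def h_def by (rule wtC)
  have hpos: "\<And>u. u \<in> C \<Longrightarrow> h u > int n"
    unfolding C_def h_def hh_def by (auto simp: C4s_vertices_def)
  have hle: "\<And>u. u \<in> C \<Longrightarrow> h u \<le> int n + 4 * int l"
    unfolding C_def h_def hh_def by (auto simp: C4s_vertices_def)
  have hpos0: "\<And>u. u \<in> C \<Longrightarrow> h u > 0"
    using hpos by (smt (verit) of_nat_0_le_iff)
  have wsd: "weighted_sum_defined V g 0 C D h"
    unfolding weighted_sum_defined_def using bg assms(2) hpos0 wtC' l
    by auto
  define W where "W = wsum_vertices V C"
  define A where "A = wsum_arcs V E g 0 C D h"
  define A' where "A' = map_prod Inl Inl ` E \<union> map_prod Inr Inr ` D
     \<union> {(Inl v0, Inr (i,j)) | i j. 1 \<le> i \<and> i \<le> l \<and> (j = (3::nat) \<or> j = 4)}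
     \<union> {(Inr (i,j), Inl v0) | i j. 1 \<le> i \<and> i \<le> l \<and> (j = (1::nat) \<or> j = 2)}"
  have AA': "A = A'"
  proof -
    have 1: "{(Inl v, Inr u) | v u. v \<in> V \<and> u \<in> C \<and> wt C D h u = - g v - 0}
      = {(Inl v0, Inr (i,j)) | i j. 1 \<le> i \<and> i \<le> l \<and> (j = (3::nat) \<or> j = 4)}"
    proof (intro set_eqI iffI)
      fix x assume "x \<in> {(Inl v, Inr u) | v u. v \<in> V \<and> u \<in> C \<and> wt C D h u = - g v - 0}"
      then obtain v i j where x: "x = (Inl v, Inr (i,j))" "v \<in> V" "(i,j) \<in> C" "wt C D h (i,j) = - g v"
        by auto
      with wtC'[of "(i,j)"] gv[of v] gv0[of v] show "x \<in> {(Inl v0, Inr (i,j)) | i j. 1 \<le> i \<and> i \<le> l \<and> (j = (3::nat) \<or> j = 4)}"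
        by (auto simp: C_def C_mem split: if_splits)
    next
      fix x assume "x \<in> {(Inl v0, Inr (i,j)) | i j. 1 \<le> i \<and> i \<le> l \<and> (j = (3::nat) \<or> j = 4)}"
      then obtain i j where x: "x = (Inl v0, Inr (i,j))" "1 \<le> i \<and> i \<le> l \<and> (j = (3::nat) \<or> j = 4)" by auto
      then have "(i,j) \<in> C" by (auto simp: C_def C_mem)
      with wtC'[of "(i,j)"] x v0 show "x \<in> {(Inl v, Inr u) | v u. v \<in> V \<and> u \<in> C \<and> wt C D h u = - g v - 0}"
        by auto
    qed
    have 2: "{(Inr u, Inl v) | v u. v \<in> V \<and> u \<in> C \<and> wt C D h u = g v + 0}
      = {(Inr (i,j), Inl v0) | i j. 1 \<le> i \<and> i \<le> l \<and> (j = (1::nat) \<or> j = 2)}"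
    proof (intro set_eqI iffI)
      fix x assume "x \<in> {(Inr u, Inl v) | v u. v \<in> V \<and> u \<in> C \<and> wt C D h u = g v + 0}"
      then obtain v i j where x: "x = (Inr (i,j), Inl v)" "v \<in> V" "(i,j) \<in> C" "wt C D h (i,j) = g v"
        by auto
      with wtC'[of "(i,j)"] gv[of v] gv0[of v] show "x \<in> {(Inr (i,j), Inl v0) | i j. 1 \<le> i \<and> i \<le> l \<and> (j = (1::nat) \<or> j = 2)}"
        by (auto simp: C_def C_mem split: if_splits)
    next
      fix x assume "x \<in> {(Inr (i,j), Inl v0) | i j. 1 \<le> i \<and> i \<le> l \<and> (j = (1::nat) \<or> j = 2)}"
      then obtain i j where x: "x = (Inr (i,j), Inl v0)" "1 \<le> i \<and> i \<le> l \<and> (j = (1::nat) \<or> j = 2)" by auto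
      then have "(i,j) \<in> C" by (auto simp: C_def C_mem)
      with wtC'[of "(i,j)"] x v0 show "x \<in> {(Inr u, Inl v) | v u. v \<in> V \<and> u \<in> C \<and> wt C D h u = g v + 0}"
        by auto
    qed
    show ?thesis unfolding A_def A'_def wsum_arcs_def 1 2 by simp
  qed
  have m1: "\<And>x y. (Inl x, Inl y) \<in> A' \<longleftrightarrow> (x,y) \<in> E" unfolding A'_def by auto
  have m2: "\<And>x y. (Inr x, Inr y) \<in> A' \<longleftrightarrow> (x,y) \<in> D" unfolding A'_def by auto
  have m3: "\<And>x i j. (Inl x, Inr (i,j)) \<in> A' \<longleftrightarrow> x = v0 \<and> 1 \<le> i \<and> i \<le> l \<and> (j = (3::nat) \<or> j = 4)"
    unfolding A'_def by auto
  have m4: "\<And>x i j. (Inr (i,j), Inl x) \<in> A' \<longleftrightarrow> x = v0 \<and> 1 \<le> i \<and> i \<le> l \<and> (j = (1::nat) \<or> j = 2)"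
    unfolding A'_def by auto
  have finC: "finite C" unfolding C_def C4s_vertices_def by auto
  have cardC: "card C = 4 * l" unfolding C_def C4s_vertices_def by (simp add: card_cartesian_product)
  have finW: "finite W" unfolding W_def wsum_vertices_def using og(1) finC by auto
  have cardW: "card W = n + 4 * l"
    unfolding W_def wsum_vertices_def using og(1) finC assms(2) cardC
    by (subst card_Un_disjoint) (auto simp: card_image)
  define F where "F = (\<lambda>x. case x of Inl v \<Rightarrow> g v | Inr u \<Rightarrow> h u)"
  have sumF: "\<And>S T. finite S \<Longrightarrow> finite T \<Longrightarrow> sum F (Inl ` S \<union> Inr ` T) = sum g S + sum h T"
    by (subst sum.union_disjoint) (auto simp: sum.reindex F_def)
  have hinj: "inj_on h C"
  proof (rule inj_onI)
    fix u w assume "u \<in> C" "w \<in> C" "h u = h w"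
    then show "u = w" unfolding h_def hh_def C_def C4s_vertices_def
      by (cases u; cases w) (auto split: if_splits; presburger)
  qed
  have Finj: "inj_on F W"
  proof (rule inj_onI)
    fix x y assume "x \<in> W" "y \<in> W" "F x = F y"
    then show "x = y" unfolding W_def wsum_vertices_def F_def
      using gin hinj gv hpos by (auto dest: inj_onD) (fastforce+)
  qed
  have Fim: "F ` W \<subseteq> {1..int (card W)}"
  proof
    fix y assume "y \<in> F ` W"
    then obtain x where x: "x \<in> W" "y = F x" by auto
    show "y \<in> {1..int (card W)}"
    proof (cases x)
      case (Inl v)
      then have "v \<in> V" using x unfolding W_def wsum_vertices_def by auto
      then show ?thesis using gv[of v] x Inl cardW by (auto simp: F_def)
    next
      case (Inr u)
      then have "u \<in> C" using x unfolding W_def wsum_vertices_def by auto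
      then show ?thesis using hpos[of u] hle[of u] x Inr cardW by (auto simp: F_def)
    qed
  qed
  have Fbij: "bij_betw F W {1..int (card W)}"
    unfolding bij_betw_def using Finj Fim
    by (metis card_atLeastAtMost_int card_image card_subset_eq diff_add_cancel finite_atLeastAtMost_int nat_int)
  show "\<exists>h'. weighted_sum_defined V g 0 (C4s_vertices l) (C4s_arcs l) h' \<and>
      DDMOG (wsum_vertices V (C4s_vertices l)) (wsum_arcs V E g 0 (C4s_vertices l) (C4s_arcs l) h')"
  proof (intro exI conjI)
    show "weighted_sum_defined V g 0 (C4s_vertices l) (C4s_arcs l) h" using wsd C_def D_def by simp
    show "DDMOG (wsum_vertices V (C4s_vertices l)) (wsum_arcs V E g 0 (C4s_vertices l) (C4s_arcs l) h)"
      unfolding C_def[symmetric] D_def[symmetric] W_def[symmetric] A_def[symmetric] AA' DDMOG_def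
    proof (intro conjI exI)
      show "oriented_graph W A'"
        unfolding oriented_graph_def
      proof (intro conjI allI impI finW)
        show "A' \<subseteq> W \<times> W"
          unfolding A'_def W_def wsum_vertices_def using og(2) v0(1)
          by (auto simp: C_def C_mem D_def D_mem)
        fix u v
        show "(v, v) \<notin> A'"
          using og(3) by (cases v) (auto simp: m1 m2 D_def D_mem)
        assume uv: "(u, v) \<in> A'"
        show "(v, u) \<notin> A'"
        proof (cases u; cases v)
          fix a b assume "u = Inl a" "v = Inl b" then show ?thesis using uv og(4) by (simp add: m1)
        next
          fix a b assume "u = Inr a" "v = Inr b" then show ?thesis using uv
            by (cases a; cases b) (simp add: m2 D_def D_mem; linarith)
        next
          fix a b assume "u = Inl a" "v = Inr b" then show ?thesis using uv
            by (cases b) (auto simp: m3 m4)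
        next
          fix a b assume "u = Inr a" "v = Inl b" then show ?thesis using uv
            by (cases a) (auto simp: m3 m4)
        qed
      qed
      have sum12: "sum h ({1..l}\<times>{1,2}) = sum h ({1..l}\<times>{3,4})"
      proof -
        have "sum h ({1..l}\<times>{1,2}) = (\<Sum>i\<in>{1..l}. h (i,1) + h (i,2))"
          using sum.cartesian_product[of "\<lambda>i j. h(i,j)" "{1,2}" "{1..l}"] by simp
        also have "\<dots> = (\<Sum>i\<in>{1..l}. h (i,3) + h (i,4))"
          by (rule sum.cong) (auto simp: h_def hh_def)
        also have "\<dots> = sum h ({1..l}\<times>{3,4})"
          using sum.cartesian_product[of "\<lambda>i j. h(i,j)" "{3,4}" "{1..l}"] by simp
        finally show ?thesis .
      qed
      show "DDM_labeling W A' F"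
        unfolding DDM_labeling_def
      proof (intro conjI Fbij ballI)
        fix x assume xW: "x \<in> W"
        show "wt W A' F x = 0"
        proof (cases x)
          case (Inl v)
          then have vV: "v \<in> V" using xW unfolding W_def wsum_vertices_def by auto
          have fin1: "finite (in_nbrs V E v)" "finite (out_nbrs V E v)"
            using og(1) by (auto simp: in_nbrs_def out_nbrs_def)
          have i1: "in_nbrs W A' (Inl v) = Inl ` in_nbrs V E v \<union> Inr ` (if v = v0 then {1..l}\<times>{1,2} else {})"
            unfolding W_def wsum_vertices_def in_nbrs_def using v0(1)
            by (auto simp: m1 m2 m3 m4 C_def C_mem)
          have o1: "out_nbrs W A' (Inl v) = Inl ` out_nbrs V E v \<union> Inr ` (if v = v0 then {1..l}\<times>{3,4} else {})"
            unfolding W_def wsum_vertices_def out_nbrs_def using v0(1)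
            by (auto simp: m1 m2 m3 m4 C_def C_mem)
          have "wt W A' F (Inl v) = wt V E g v + ((if v = v0 then sum h ({1..l}\<times>{1,2}) else 0)
               - (if v = v0 then sum h ({1..l}\<times>{3,4}) else 0))"
            unfolding wt_def i1 o1 using fin1 by (simp add: sumF)
          then show ?thesis using Inl wg[OF vV] sum12 by simp
        next
          case (Inr u)
          obtain i j where u: "u = (i,j)" by force
          have uC: "(i,j) \<in> C" using xW Inr u unfolding W_def wsum_vertices_def by auto
          then have i: "1 \<le> i" "i \<le> l" and j: "j = 1 \<or> j = 2 \<or> j = 3 \<or> j = 4"
            by (auto simp: C_def C_mem)
          have WI: "\<And>a b. Inr (a,b) \<in> W \<longleftrightarrow> (a,b) \<in> C" "\<And>a. Inl a \<in> W \<longleftrightarrow> a \<in> V"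
            unfolding W_def wsum_vertices_def by auto
          have inR: "\<And>y. Inr y \<in> in_nbrs W A' (Inr (i,j)) \<longleftrightarrow> (y,(i,j)) \<in> D"
            unfolding in_nbrs_def by (auto simp: WI m2 C_def C_mem D_def D_mem)
          have inL: "\<And>y. Inl y \<in> in_nbrs W A' (Inr (i,j)) \<longleftrightarrow> y = v0 \<and> (j = 3 \<or> j = 4)"
            unfolding in_nbrs_def using i v0(1) by (auto simp: WI m3)
          have outR: "\<And>y. Inr y \<in> out_nbrs W A' (Inr (i,j)) \<longleftrightarrow> ((i,j),y) \<in> D"
            unfolding out_nbrs_def by (auto simp: WI m2 C_def C_mem D_def D_mem)
          have outL: "\<And>y. Inl y \<in> out_nbrs W A' (Inr (i,j)) \<longleftrightarrow> y = v0 \<and> (j = 1 \<or> j = 2)"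
            unfolding out_nbrs_def using i v0(1) by (auto simp: WI m4)
          have I: "in_nbrs W A' (Inr (i,j)) = {Inr (i, if j = 1 then 4 else j - 1)} \<union> (if j = 3 \<or> j = 4 then {Inl v0} else {})"
          proof (rule set_eqI)
            fix x show "x \<in> in_nbrs W A' (Inr (i,j)) \<longleftrightarrow> x \<in> {Inr (i, if j = 1 then 4 else j - 1)} \<union> (if j = 3 \<or> j = 4 then {Inl v0} else {})"
            proof (cases x)
              case (Inl y) then show ?thesis by (simp add: inL)
            next
              case (Inr y) then show ?thesis using i j
                by (cases y) (simp add: inR D_def D_mem; linarith)
            qed
          qed
          have O: "out_nbrs W A' (Inr (i,j)) = {Inr (i, if j = 4 then 1 else j + 1)} \<union> (if j = 1 \<or> j = 2 then {Inl v0} else {})"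
          proof (rule set_eqI)
            fix x show "x \<in> out_nbrs W A' (Inr (i,j)) \<longleftrightarrow> x \<in> {Inr (i, if j = 4 then 1 else j + 1)} \<union> (if j = 1 \<or> j = 2 then {Inl v0} else {})"
            proof (cases x)
              case (Inl y) then show ?thesis by (simp add: outL)
            next
              case (Inr y) then show ?thesis using i j
                by (cases y) (simp add: outR D_def D_mem; linarith)
            qed
          qed
          show ?thesis unfolding Inr u wt_def I O using j v0(2)
            by (auto simp: F_def h_def hh_def)
        qed
      qed
    qed
  qed
qed

end
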